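(* Let $p$ have a habit formation logit representation $(v,c)$ and let $x\in X\setminus\{o\}$. The standard logit estimator $\hat v(x)=\log\left(\frac{p(x,\{x,o\})}{p(o,\{x,o\})}\right)$ is unbiased, i.e. $\hat v(x)=v(x)$, if and only if $c(x)=0$.
   Context: $X$ is a finite set containing an outside option $o$; choice sets are subsets of $X$ containing $o$. Given $v:X\to\mathbb{R}$ and $c:X\to\mathbb{R}_{\ge0}$ with $v(o)=c(o)=0$, for each choice set $A$ define the Markov chain on $A$ with transition probabilities from $y$ to $x$ equal to $\frac{e^{v(x)+c(x)\mathbf{1}\{x=y\}}}{\sum_{z\in A}e^{v(z)+c(z)\mathbf{1}\{z=y\}}}$. A random choice rule $p$ has a habit formation logit representation $(v,c)$ if for each choice set $A$, $p(\cdot,A)$ is the stationary distribution of this chain. *)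

theory Defs
  imports Complex_Main
begin

definition choice_sets :: "'a set \<Rightarrow> 'a \<Rightarrow> 'a set set" where
  "choice_sets X oo = {A. A \<subseteq> X \<and> oo \<in> A}"

definition random_choice_rule :: "'a set \<Rightarrow> 'a \<Rightarrow> ('a \<Rightarrow> 'a set \<Rightarrow> real) \<Rightarrow> bool" where
  "random_choice_rule X oo p \<longleftrightarrow>
     (\<forall>A\<in>choice_sets X oo. (\<forall>x. p x A \<ge> 0) \<and> (\<forall>x. x \<notin> A \<longrightarrow> p x A = 0)
        \<and> (\<Sum>x\<in>A. p x A) = 1)"

definition hf_trans :: "('a \<Rightarrow> real) \<Rightarrow> ('a \<Rightarrow> real) \<Rightarrow> 'a set \<Rightarrow> 'a \<Rightarrow> 'a \<Rightarrow> real" where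
  "hf_trans v c A y x =
     exp (v x + c x * (if x = y then 1 else 0)) /
     (\<Sum>z\<in>A. exp (v z + c z * (if z = y then 1 else 0)))"

definition is_stationary :: "('a \<Rightarrow> 'a \<Rightarrow> real) \<Rightarrow> 'a set \<Rightarrow> ('a \<Rightarrow> real) \<Rightarrow> bool" where
  "is_stationary P A q \<longleftrightarrow>
     (\<forall>x\<in>A. q x \<ge> 0) \<and> (\<Sum>x\<in>A. q x) = 1 \<and>
     (\<forall>x\<in>A. (\<Sum>y\<in>A. q y * P y x) = q x)"

definition habit_logit_rep ::
  "'a set \<Rightarrow> 'a \<Rightarrow> ('a \<Rightarrow> 'a set \<Rightarrow> real) \<Rightarrow> ('a \<Rightarrow> real) \<Rightarrow> ('a \<Rightarrow> real) \<Rightarrow> bool" where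
  "habit_logit_rep X oo p v c \<longleftrightarrow>
     v oo = 0 \<and> c oo = 0 \<and> (\<forall>x\<in>X. c x \<ge> 0) \<and>
     (\<forall>A\<in>choice_sets X oo. is_stationary (hf_trans v c A) A (\<lambda>x. p x A))"

end

theory Submission
  imports Defs
begin

theorem proposition5:
  fixes X :: "'a set" and oo x :: 'a
    and p :: "'a \<Rightarrow> 'a set \<Rightarrow> real" and v c :: "'a \<Rightarrow> real"
  assumes "finite X" and "oo \<in> X"
    and "random_choice_rule X oo p"
    and "habit_logit_rep X oo p v c"
    and "x \<in> X - {oo}"
  shows "ln (p x {x, oo} / p oo {x, oo}) = v x \<longleftrightarrow> c x = 0"
proof -
  define A where "A = {x, oo}"
  have xo: "x \<noteq> oo" "x \<in> X" using assms(5) by auto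
  have AC: "A \<in> choice_sets X oo" using xo assms(2) by (auto simp: A_def choice_sets_def)
  have v0: "v oo = 0" and c0: "c oo = 0" using assms(4) by (auto simp: habit_logit_rep_def)
  have st: "is_stationary (hf_trans v c A) A (\<lambda>y. p y A)"
    using assms(4) AC by (auto simp: habit_logit_rep_def)
  define a where "a = exp (v x)"
  define b where "b = exp (v x + c x)"
  define px where "px = p x A"
  define po where "po = p oo A"
  have apos: "a > 0" and bpos: "b > 0" by (auto simp: a_def b_def)
  have sum1: "px + po = 1" using st xo by (simp add: is_stationary_def A_def px_def po_def)
  have nn: "px \<ge> 0" "po \<ge> 0" using st xo by (auto simp: is_stationary_def A_def px_def po_def)
  have T1: "hf_trans v c A x x = b / (b + 1)"
    using xo v0 c0 by (simp add: hf_trans_def A_def b_def)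
  have T2: "hf_trans v c A oo x = a / (1 + a)"
    using xo v0 c0 by (simp add: hf_trans_def A_def a_def)
  have eq0: "px * hf_trans v c A x x + po * hf_trans v c A oo x = px"
    using st xo by (simp add: is_stationary_def A_def px_def po_def)
  hence eq: "px * (b / (b+1)) + po * (a / (1+a)) = px" using T1 T2 by simp
  have e1: "px * (b / (b+1)) = px * b / (b+1)" by simp
  have e2: "px - px * b / (b+1) = px / (b+1)" using bpos by (simp add: field_simps)
  have e3: "po * (a / (1+a)) = px / (b+1)" using eq e1 e2 by linarith
  hence eq2: "po * a * (b+1) = px * (1+a)" using apos bpos
    by (simp add: field_simps)
  have popos: "po > 0"
  proof (rule ccontr)
    assume "\<not> po > 0" hence "po = 0" using nn by simp
    hence "px = 0" using eq2 apos by simp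
    thus False using sum1 \<open>po = 0\<close> by simp
  qed
  have ratio: "px / po = a * ((b+1)/(1+a))" using eq2 popos apos
    by (simp add: field_simps)
  have "ln (px / po) = v x + ln ((b+1)/(1+a))"
  proof -
    have "ln (px / po) = ln a + ln ((b+1)/(1+a))"
      unfolding ratio using apos bpos ln_mult[of a "(b+1)/(1+a)"] by (simp only:) (simp add: add_pos_pos)
    thus ?thesis by (simp add: a_def)
  qed
  hence "ln (px / po) = v x \<longleftrightarrow> (b+1)/(1+a) = 1" using apos bpos by simp
  also have "\<dots> \<longleftrightarrow> b = a" using apos by (auto simp: field_simps)
  also have "\<dots> \<longleftrightarrow> c x = 0" by (simp add: a_def b_def)
  finally show ?thesis by (simp add: px_def po_def A_def)
qed

end
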